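(* Let $\phi_{\mathrm p}$ be a Bregman kernel on $\mathbb R^n$ whose distance satisfies $d_{\mathrm p}(x,x')\ge\frac12\|x-x'\|^2$ (Euclidean norm), and $\phi_{\mathrm d}$ a Bregman kernel on $\mathbb R^m$ whose distance satisfies $d_{\mathrm d}(z,z')\ge\frac12\|z-z'\|_{\mathrm d}^2$ for a norm $\|\cdot\|_{\mathrm d}$. Let $A\in\mathbb R^{m\times n}$ with $\|A\|=\sup_{v\ne0}\|Av\|_{\mathrm d,*}/\|v\|$, where $\|\cdot\|_{\mathrm d,*}$ is the dual norm of $\|\cdot\|_{\mathrm d}$, and let $\sigma,\tau>0$ with $\sigma\tau\|A\|^2\le1$. Then the function \[\phi_{\mathrm{pd3o}}(x,y,z)=\frac1\tau\phi_{\mathrm p}(x)+\frac1\sigma\phi_{\mathrm d}(z)+\frac\tau2\|y\|^2-\langle y,x\rangle-\langle z,A(x-\tau y)\rangle\] (on $\operatorname{dom}\phi_{\mathrm p}\times\mathbb R^n\times\operatorname{dom}\phi_{\mathrm d}$) is convex; equivalently its Bregman distance \[d_{\mathrm{pd3o}}(x,y,z;x',y',z')=\tfrac1\tau d_{\mathrm p}(x,x')+\tfrac1\sigma d_{\mathrm d}(z,z')+\tfrac\tau2\|y-y'\|^2-\langle y-y',x-x'\rangle-\langle z-z',A(x-x')\rangle+\tau\langle z-z',A(y-y')\rangle\] is nonnegative.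
   Context: A Bregman kernel $\phi$ is convex with $\operatorname{int}(\operatorname{dom}\phi)\ne\emptyset$, continuous on $\operatorname{dom}\phi$ and continuously differentiable on $\operatorname{int}(\operatorname{dom}\phi)$; its distance is $d(x,y)=\phi(x)-\phi(y)-\langle\nabla\phi(y),x-y\rangle$ on $\operatorname{dom}\phi\times\operatorname{int}(\operatorname{dom}\phi)$. *)

theory Defs
  imports "HOL-Analysis.Analysis"
begin

definition bgrad :: "('a::euclidean_space \<Rightarrow> real) \<Rightarrow> 'a \<Rightarrow> 'a" where
  "bgrad f x = (THE g. (f has_derivative (\<lambda>h. g \<bullet> h)) (at x))"

definition bregman_kernel :: "'a::euclidean_space set \<Rightarrow> ('a \<Rightarrow> real) \<Rightarrow> bool" where
  "bregman_kernel D f \<longleftrightarrow>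
     convex D \<and> convex_on D f \<and> interior D \<noteq> {} \<and> continuous_on D f \<and>
     (\<forall>x\<in>interior D. f differentiable (at x)) \<and>
     continuous_on (interior D) (bgrad f)"

text \<open>Bregman distance d(x,y), meant for x in D and y in interior D.\<close>
definition bregman_dist :: "('a::euclidean_space \<Rightarrow> real) \<Rightarrow> 'a \<Rightarrow> 'a \<Rightarrow> real" where
  "bregman_dist f x y = f x - f y - bgrad f y \<bullet> (x - y)"

definition is_norm :: "('a::real_vector \<Rightarrow> real) \<Rightarrow> bool" where
  "is_norm N \<longleftrightarrow> (\<forall>x. N x \<ge> 0) \<and> (\<forall>x. N x = 0 \<longleftrightarrow> x = 0) \<and>
     (\<forall>c x. N (c *\<^sub>R x) = \<bar>c\<bar> * N x) \<and> (\<forall>x y. N (x + y) \<le> N x + N y)"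

definition dual_norm :: "('a::real_inner \<Rightarrow> real) \<Rightarrow> 'a \<Rightarrow> real" where
  "dual_norm N u = Sup {u \<bullet> z | z. N z \<le> 1}"

definition op_norm_d :: "(real^'m \<Rightarrow> real) \<Rightarrow> real^'n^'m \<Rightarrow> real" where
  "op_norm_d N A = Sup {dual_norm N (A *v v) / norm v | v. v \<noteq> 0}"

end

theory Submission imports Defs begin

lemma isn_zero: "is_norm N \<Longrightarrow> N 0 = 0" by (simp add: is_norm_def)

lemma isn_sum: assumes "is_norm N" shows "finite S \<Longrightarrow> N (sum f S) \<le> (\<Sum>i\<in>S. N (f i))"
proof (induction S rule: finite_induct)
  case empty
  have "N 0 = 0" using assms unfolding is_norm_def by blast
  then show ?case by simp
next
  case (insert x F)
  have "N (f x + sum f F) \<le> N (f x) + N (sum f F)" using assms by (simp add: is_norm_def)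
  then show ?case using insert by simp
qed

lemma isn_upper:
  fixes N :: "real^'m \<Rightarrow> real"
  assumes "is_norm N"
  shows "\<exists>C\<ge>0. \<forall>z. N z \<le> C * norm z"
proof -
  define C where "C = (\<Sum>i\<in>UNIV. N (axis i 1))"
  have C0: "C \<ge> 0" unfolding C_def using assms by (simp add: is_norm_def sum_nonneg)
  { fix z :: "real^'m"
    have "N z = N (\<Sum>i\<in>UNIV. z$i *\<^sub>R axis i 1)"
      using basis_expansion[of z] by (simp add: scalar_mult_eq_scaleR)
    also have "\<dots> \<le> (\<Sum>i\<in>UNIV. N (z$i *\<^sub>R axis i 1))" by (rule isn_sum[OF assms]) simp
    also have "\<dots> = (\<Sum>i\<in>UNIV. \<bar>z$i\<bar> * N (axis i 1))" using assms by (simp add: is_norm_def)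
    also have "\<dots> \<le> (\<Sum>i\<in>UNIV. norm z * N (axis i 1))"
      apply (rule sum_mono) apply (rule mult_right_mono)
      using assms component_le_norm_cart by (auto simp: is_norm_def)
    also have "\<dots> = C * norm z" by (simp add: C_def sum_distrib_left mult.commute)
    finally have "N z \<le> C * norm z" . }
  then show ?thesis using C0 by blast
qed

lemma isn_lower:
  fixes N :: "real^'m \<Rightarrow> real"
  assumes n: "is_norm N"
  shows "\<exists>c>0. \<forall>z. c * norm z \<le> N z"
proof -
  obtain C where C: "C \<ge> 0" "\<And>z. N z \<le> C * norm z" using isn_upper[OF n] by blast
  have tri: "N x \<le> N (x - y) + N y" for x y
    using n unfolding is_norm_def by (metis diff_add_cancel)
  have neg: "N (-x) = N x" for x using n unfolding is_norm_def
    by (metis abs_minus_cancel abs_one mult_1 scaleR_minus1_left)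
  have "C-lipschitz_on UNIV N"
  proof (rule lipschitz_onI)
    fix x y :: "real^'m"
    have "N x - N y \<le> C * norm (x - y)" using tri[of x y] C(2)[of "x-y"] by simp
    moreover have "N y - N x \<le> C * norm (x - y)" using tri[of y x] C(2)[of "y-x"]
      by (simp add: norm_minus_commute)
    ultimately show "dist (N x) (N y) \<le> C * dist x y" by (simp add: dist_real_def dist_norm abs_le_iff)
  qed (use C in auto)
  then have cont: "continuous_on UNIV N" by (rule lipschitz_on_continuous_on)
  have ne: "sphere (0::real^'m) 1 \<noteq> {}"
  proof -
    have "axis undefined (1::real) \<in> sphere (0::real^'m) 1" by (simp add: sphere_def)
    then show ?thesis by blast
  qed
  obtain z0 where z0: "z0 \<in> sphere 0 1" "\<And>y. y \<in> sphere 0 1 \<Longrightarrow> N z0 \<le> N y"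
    using continuous_attains_inf[OF compact_sphere ne continuous_on_subset[OF cont]] by blast
  have "z0 \<noteq> 0" using z0 by auto
  then have cpos: "N z0 > 0" using n unfolding is_norm_def by (metis less_eq_real_def)
  { fix z :: "real^'m"
    have "N z0 * norm z \<le> N z"
    proof (cases "z = 0")
      case True then show ?thesis using n by (simp add: is_norm_def)
    next
      case False
      have "(1 / norm z) *\<^sub>R z \<in> sphere 0 1" using False by (simp add: sphere_def)
      then have "N z0 \<le> N ((1 / norm z) *\<^sub>R z)" by (rule z0(2))
      also have "\<dots> = N z / norm z" using n by (simp add: is_norm_def)
      finally show ?thesis using False by (simp add: field_simps)
    qed }
  then show ?thesis using cpos by blast
qed

lemma dual_facts:
  fixes N :: "real^'m \<Rightarrow> real"
  assumes n: "is_norm N"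
  shows "\<exists>c>0. (\<forall>u. dual_norm N u \<le> norm u / c) \<and> (\<forall>u v. v \<bullet> u \<le> N v * dual_norm N u)
     \<and> (\<forall>u. 0 \<le> dual_norm N u)"
proof -
  obtain c where c: "c > 0" "\<And>z. c * norm z \<le> N z" using isn_lower[OF n] by blast
  have bdd: "u \<bullet> z \<le> norm u / c" if "N z \<le> 1" for u z
  proof -
    have "norm z \<le> 1 / c" using c(2)[of z] that c(1) by (simp add: field_simps)
    then have "norm u * norm z \<le> norm u * (1/c)" by (rule mult_left_mono) simp
    then show ?thesis using Cauchy_Schwarz_ineq2[of u z] by simp
  qed
  have ne: "{u \<bullet> z | z. N z \<le> 1} \<noteq> {}" for u using isn_zero[OF n] by (auto intro!: exI[of _ 0])
  have bda: "bdd_above {u \<bullet> z | z. N z \<le> 1}" for u using bdd by (auto intro!: bdd_aboveI)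
  have d1: "dual_norm N u \<le> norm u / c" for u
    unfolding dual_norm_def by (rule cSup_least) (use ne bdd in auto)
  have d0: "0 \<le> dual_norm N u" for u
    unfolding dual_norm_def
    by (rule cSup_upper2[OF _ _ bda, of 0]) (use isn_zero[OF n] in \<open>auto intro!: exI[of _ 0]\<close>)
  have d2: "v \<bullet> u \<le> N v * dual_norm N u" for u v
  proof (cases "v = 0")
    case True then show ?thesis using isn_zero[OF n] by simp
  next
    case False
    then have Np: "N v > 0" using n unfolding is_norm_def by (metis less_eq_real_def)
    have "N ((1 / N v) *\<^sub>R v) \<le> 1" using n Np by (simp add: is_norm_def)
    then have "u \<bullet> ((1 / N v) *\<^sub>R v) \<le> dual_norm N u"
      unfolding dual_norm_def by (intro cSup_upper[OF _ bda]) blast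
    then have "(v \<bullet> u) / N v \<le> dual_norm N u" by (simp add: inner_commute)
    then show ?thesis using Np by (simp add: field_simps)
  qed
  show ?thesis using c d1 d2 d0 by blast
qed

lemma op_facts:
  fixes N :: "real^'m \<Rightarrow> real" and A :: "real^'n^'m"
  assumes n: "is_norm N"
  shows "\<forall>p. dual_norm N (A *v p) \<le> op_norm_d N A * norm p"
proof -
  obtain c where c: "c > 0" "\<And>u. dual_norm N u \<le> norm u / c" "\<And>u. 0 \<le> dual_norm N u"
    using dual_facts[OF n] by blast
  obtain K where K: "\<And>v. norm (A *v v) \<le> norm v * K"
    using bounded_linear.bounded[OF matrix_vector_mul_bounded_linear[of A]] by blast
  let ?S = "{dual_norm N (A *v v) / norm v | v. v \<noteq> 0}"
  have bda: "bdd_above ?S"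
  proof (rule bdd_aboveI)
    fix s assume "s \<in> ?S"
    then obtain v where v: "v \<noteq> 0" "s = dual_norm N (A *v v) / norm v" by blast
    have "dual_norm N (A *v v) \<le> norm v * K / c" using c(2)[of "A *v v"] K[of v] c(1)
      by (smt (verit) divide_right_mono)
    then have "dual_norm N (A *v v) / norm v \<le> (norm v * K / c) / norm v"
      by (rule divide_right_mono) simp
    then show "s \<le> K / c" using v by simp
  qed
  { fix p :: "real^'n"
    have "dual_norm N (A *v p) \<le> op_norm_d N A * norm p"
    proof (cases "p = 0")
      case True
      have "{(0::real^'m) \<bullet> z | z. N z \<le> 1} = {0}" using isn_zero[OF n] by (auto intro!: exI[of _ 0])
      then have "dual_norm N 0 = 0" unfolding dual_norm_def by simp
      then show ?thesis using True by simp
    next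
      case False
      have "dual_norm N (A *v p) / norm p \<le> op_norm_d N A"
        unfolding op_norm_d_def by (rule cSup_upper[OF _ bda]) (use False in blast)
      then show ?thesis using False by (simp add: field_simps)
    qed }
  then show ?thesis by blast
qed

lemma convex_from_support:
  fixes F :: "'a::euclidean_space \<Rightarrow> real"
  assumes cD: "convex D" and iD: "interior D \<noteq> {}" and cF: "continuous_on D F"
    and sup: "\<And>b. b \<in> interior D \<Longrightarrow> \<exists>g. \<forall>a\<in>D. F b + g \<bullet> (a - b) \<le> F a"
  shows "convex_on D F"
proof (rule convex_onI[OF _ cD])
  fix t :: real and x y assume t: "0 < t" "t < 1" and xy: "x \<in> D" "y \<in> D"
  have int_case: "F ((1 - t) *\<^sub>R a1 + t *\<^sub>R a2) \<le> (1 - t) * F a1 + t * F a2"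
    if a: "a1 \<in> D" "a2 \<in> D" "(1 - t) *\<^sub>R a1 + t *\<^sub>R a2 \<in> interior D" for a1 a2
  proof -
    let ?c = "(1 - t) *\<^sub>R a1 + t *\<^sub>R a2"
    obtain g where g: "F ?c + g \<bullet> (a1 - ?c) \<le> F a1" "F ?c + g \<bullet> (a2 - ?c) \<le> F a2"
    proof -
      obtain g where g: "\<And>a. a \<in> D \<Longrightarrow> F ?c + g \<bullet> (a - ?c) \<le> F a"
        using sup a(3) by metis
      then show ?thesis using that a by blast
    qed
    have "(1 - t) * (F ?c + g \<bullet> (a1 - ?c)) + t * (F ?c + g \<bullet> (a2 - ?c)) \<le> (1 - t) * F a1 + t * F a2"
      using g t by (intro add_mono mult_left_mono) auto
    moreover have "(1 - t) * (F ?c + g \<bullet> (a1 - ?c)) + t * (F ?c + g \<bullet> (a2 - ?c)) = F ?c"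
      by (simp add: algebra_simps inner_diff_right inner_add_right)
    ultimately show ?thesis by simp
  qed
  obtain e where e: "e \<in> interior D" using iD by blast
  define h where "h q s = q - s *\<^sub>R (q - e)" for q :: 'a and s :: real
  have hint: "h q s \<in> interior D" if "q \<in> D" "s \<in> {0<..<1}" for q s
    unfolding h_def using mem_interior_convex_shrink[OF cD e that(1)] that(2) by auto
  have lim: "((\<lambda>s. F (h q s)) \<longlongrightarrow> F q) (at_right 0)" if "q \<in> D" for q
  proof -
    have "((\<lambda>s. h q s) \<longlongrightarrow> h q 0) (at_right 0)"
      unfolding h_def by (intro tendsto_intros)
    then have "((\<lambda>s. h q s) \<longlongrightarrow> q) (at_right 0)" by (simp add: h_def)
    moreover have "\<forall>\<^sub>F s in at_right 0. h q s \<in> D"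
      using eventually_at_right_real[of 0 1] hint[OF that] interior_subset
      by (auto elim!: eventually_mono)
    ultimately show ?thesis
      using continuous_on_tendsto_compose[OF cF _ that, of "h q"] by blast
  qed
  let ?c = "(1 - t) *\<^sub>R x + t *\<^sub>R y"
  have cD': "?c \<in> D" using cD xy t by (simp add: convex_alt)
  have hc: "h ?c s = (1 - t) *\<^sub>R h x s + t *\<^sub>R h y s" for s
    by (simp add: h_def algebra_simps)
  have ev: "\<forall>\<^sub>F s in at_right 0. F (h ?c s) \<le> (1 - t) * F (h x s) + t * F (h y s)"
    using eventually_at_right_real[of 0 1]
  proof (rule eventually_mono)
    fix s assume s: "s \<in> {0<..<1::real}"
    have "h x s \<in> D" "h y s \<in> D" using hint[OF xy(1) s] hint[OF xy(2) s] interior_subset by auto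
    moreover have "(1 - t) *\<^sub>R h x s + t *\<^sub>R h y s \<in> interior D"
      using hint[OF cD' s] hc by simp
    ultimately show "F (h ?c s) \<le> (1 - t) * F (h x s) + t * F (h y s)"
      using int_case hc by simp
  qed (simp)
  show "F ?c \<le> (1 - t) * F x + t * F y"
    by (rule tendsto_le[OF trivial_limit_at_right_real _ lim[OF cD'] ev])
       (intro tendsto_intros lim xy)
qed

lemma quad_bound:
  fixes N :: "real^'m \<Rightarrow> real" and A :: "real^'n^'m" and \<sigma> \<tau> a b :: real
  assumes n: "is_norm N" and pos: "\<sigma> > 0" "\<tau> > 0"
    and step: "\<sigma> * \<tau> * (op_norm_d N A)\<^sup>2 \<le> 1"
    and ha: "a \<ge> 1/2 * (norm u)\<^sup>2" and hb: "b \<ge> 1/2 * (N v)\<^sup>2"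
  shows "0 \<le> 1/\<tau> * a + 1/\<sigma> * b + \<tau>/2 * (norm w)\<^sup>2 - w \<bullet> u - v \<bullet> (A *v u) + \<tau> * (v \<bullet> (A *v w))"
proof -
  define L where "L = op_norm_d N A"
  obtain c where c: "\<And>u v. v \<bullet> u \<le> N v * dual_norm N u" "\<And>u. 0 \<le> dual_norm N u"
    using dual_facts[OF n] by blast
  have op: "\<And>p. dual_norm N (A *v p) \<le> L * norm p" using op_facts[OF n] L_def by blast
  have L0: "L \<ge> 0"
  proof -
    have "0 \<le> L * norm (axis undefined (1::real) :: real^'n)"
      using op[of "axis undefined 1"] c(2)[of "A *v axis undefined 1"] by linarith
    then show ?thesis by (simp add: zero_le_mult_iff)
  qed
  define p where "p = u - \<tau> *\<^sub>R w"
  define P where "P = norm p"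
  define M where "M = N v"
  have M0: "M \<ge> 0" using n by (simp add: M_def is_norm_def)
  have P0: "P \<ge> 0" by (simp add: P_def)
  have "v \<bullet> (A *v p) \<le> M * dual_norm N (A *v p)" using c(1) M_def by blast
  also have "\<dots> \<le> M * (L * P)" using op[of p] M0 P_def by (simp add: mult_left_mono)
  finally have vp: "v \<bullet> (A *v u) - \<tau> * (v \<bullet> (A *v w)) \<le> L * M * P"
    by (simp add: p_def algebra_simps inner_diff_right)
  have Pu: "P\<^sup>2 = (norm u)\<^sup>2 - 2 * \<tau> * (w \<bullet> u) + \<tau>\<^sup>2 * (norm w)\<^sup>2"
  proof -
    have "P\<^sup>2 = p \<bullet> p" by (simp add: P_def power2_norm_eq_inner)
    also have "\<dots> = u \<bullet> u - 2 * \<tau> * (w \<bullet> u) + \<tau>\<^sup>2 * (w \<bullet> w)"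
      by (simp add: p_def inner_diff_left inner_diff_right inner_commute power2_eq_square algebra_simps)
    finally show ?thesis by (simp add: power2_norm_eq_inner)
  qed
  have amgm: "0 \<le> P\<^sup>2 / (2*\<tau>) + M\<^sup>2 / (2*\<sigma>) - L * M * P"
  proof -
    have st: "\<sigma> * \<tau> * L\<^sup>2 \<le> 1" using step L_def by simp
    have "0 \<le> \<sigma> * (P - \<tau> * L * M)\<^sup>2 + \<tau> * M\<^sup>2 * (1 - \<sigma> * \<tau> * L\<^sup>2)"
      using pos st by (intro add_nonneg_nonneg mult_nonneg_nonneg) auto
    also have "\<dots> = 2 * \<sigma> * \<tau> * (P\<^sup>2 / (2*\<tau>) + M\<^sup>2 / (2*\<sigma>) - L * M * P)"
      using pos by (simp add: field_simps power2_eq_square)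
    finally have "0 \<le> (2 * \<sigma> * \<tau>) * (P\<^sup>2 / (2*\<tau>) + M\<^sup>2 / (2*\<sigma>) - L * M * P)" .
    moreover have "2 * \<sigma> * \<tau> > 0" using pos by simp
    ultimately show ?thesis using zero_le_mult_iff by (metis not_less)
  qed
  have "1/\<tau> * a \<ge> 1/\<tau> * (1/2 * (norm u)\<^sup>2)" by (rule mult_left_mono) (use ha pos in auto)
  moreover have "1/\<sigma> * b \<ge> 1/\<sigma> * (1/2 * M\<^sup>2)" by (rule mult_left_mono) (use hb pos M_def in auto)
  moreover have "1/\<tau> * (1/2 * (norm u)\<^sup>2) + \<tau>/2 * (norm w)\<^sup>2 - w \<bullet> u = P\<^sup>2 / (2*\<tau>)"
    using pos Pu by (simp add: field_simps power2_eq_square)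
  moreover have "1/\<sigma> * (1/2 * M\<^sup>2) = M\<^sup>2 / (2*\<sigma>)" by simp
  ultimately show ?thesis using vp amgm M_def by linarith
qed

theorem mainTheorem7:
  fixes phip :: "real^'n \<Rightarrow> real" and Dp :: "(real^'n) set"
    and phid :: "real^'m \<Rightarrow> real" and Dd :: "(real^'m) set"
    and Nd :: "real^'m \<Rightarrow> real" and A :: "real^'n^'m"
    and \<sigma> \<tau> :: real
  assumes kp: "bregman_kernel Dp phip"
    and kd: "bregman_kernel Dd phid"
    and nd: "is_norm Nd"
    and sp: "\<And>x x'. x \<in> Dp \<Longrightarrow> x' \<in> interior Dp \<Longrightarrow>
               bregman_dist phip x x' \<ge> 1/2 * (norm (x - x'))\<^sup>2"
    and sd: "\<And>z z'. z \<in> Dd \<Longrightarrow> z' \<in> interior Dd \<Longrightarrow>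
               bregman_dist phid z z' \<ge> 1/2 * (Nd (z - z'))\<^sup>2"
    and pos: "\<sigma> > 0" "\<tau> > 0"
    and step: "\<sigma> * \<tau> * (op_norm_d Nd A)\<^sup>2 \<le> 1"
  shows "convex_on (Dp \<times> UNIV \<times> Dd)
           (\<lambda>(x, y, z). 1/\<tau> * phip x + 1/\<sigma> * phid z + \<tau>/2 * (norm y)\<^sup>2
                        - y \<bullet> x - z \<bullet> (A *v (x - \<tau> *\<^sub>R y)))
       \<and> (\<forall>x y z x' y' z'. x \<in> Dp \<longrightarrow> z \<in> Dd \<longrightarrow> x' \<in> interior Dp \<longrightarrow> z' \<in> interior Dd \<longrightarrow>
            0 \<le> 1/\<tau> * bregman_dist phip x x' + 1/\<sigma> * bregman_dist phid z z'
                 + \<tau>/2 * (norm (y - y'))\<^sup>2 - (y - y') \<bullet> (x - x')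
                 - (z - z') \<bullet> (A *v (x - x')) + \<tau> * ((z - z') \<bullet> (A *v (y - y'))))"
proof -
  have P2: "\<forall>x y z x' y' z'. x \<in> Dp \<longrightarrow> z \<in> Dd \<longrightarrow> x' \<in> interior Dp \<longrightarrow> z' \<in> interior Dd \<longrightarrow>
            0 \<le> 1/\<tau> * bregman_dist phip x x' + 1/\<sigma> * bregman_dist phid z z'
                 + \<tau>/2 * (norm (y - y'))\<^sup>2 - (y - y') \<bullet> (x - x')
                 - (z - z') \<bullet> (A *v (x - x')) + \<tau> * ((z - z') \<bullet> (A *v (y - y')))"
    using quad_bound[OF nd pos step sp sd] by blast
  define F where "F = (\<lambda>(x, y, z). 1/\<tau> * phip x + 1/\<sigma> * phid z + \<tau>/2 * (norm y)\<^sup>2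
                        - y \<bullet> x - z \<bullet> (A *v (x - \<tau> *\<^sub>R y)))"
  let ?D = "Dp \<times> (UNIV :: (real^'n) set) \<times> Dd"
  have cDp: "convex Dp" "interior Dp \<noteq> {}" "continuous_on Dp phip"
    using kp by (auto simp: bregman_kernel_def)
  have cDd: "convex Dd" "interior Dd \<noteq> {}" "continuous_on Dd phid"
    using kd by (auto simp: bregman_kernel_def)
  have cD: "convex ?D" using cDp cDd by (intro convex_Times convex_UNIV)
  have iD: "interior ?D = interior Dp \<times> UNIV \<times> interior Dd" by (simp add: interior_Times)
  have iDne: "interior ?D \<noteq> {}" using iD cDp cDd by auto
  have c1: "continuous_on ?D (\<lambda>p. phip (fst p))"
    by (rule continuous_on_compose2[OF cDp(3) continuous_on_fst]) auto
  have c2: "continuous_on ?D (\<lambda>p. phid (snd (snd p)))"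
    by (rule continuous_on_compose2[OF cDd(3)]) (auto intro!: continuous_intros)
  have Feq: "F = (\<lambda>p. 1/\<tau> * phip (fst p) + 1/\<sigma> * phid (snd (snd p)) + \<tau>/2 * (norm (fst (snd p)))\<^sup>2
                 - fst (snd p) \<bullet> fst p - snd (snd p) \<bullet> (A *v (fst p - \<tau> *\<^sub>R fst (snd p))))"
    by (auto simp: F_def)
  have cF: "continuous_on ?D F"
  proof -
    have c3: "continuous_on ?D (\<lambda>p. A *v (fst p - \<tau> *\<^sub>R fst (snd p)))"
      by (rule bounded_linear.continuous_on[OF matrix_vector_mul_bounded_linear]) (intro continuous_intros)
    show ?thesis unfolding Feq by (intro continuous_intros c1 c2 c3)
  qed
  have sup: "\<exists>g. \<forall>a\<in>?D. F b + g \<bullet> (a - b) \<le> F a" if b: "b \<in> interior ?D" for b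
  proof -
    obtain x' y' z' where bb: "b = (x', y', z')" by (cases b) auto
    have x': "x' \<in> interior Dp" and z': "z' \<in> interior Dd" using b bb iD by auto
    define gp where "gp = bgrad phip x'"
    define gd where "gd = bgrad phid z'"
    define g where "g = ((1/\<tau>) *\<^sub>R gp - y' - (z' v* A),
                         \<tau> *\<^sub>R y' - x' + \<tau> *\<^sub>R (z' v* A),
                         (1/\<sigma>) *\<^sub>R gd - A *v x' + \<tau> *\<^sub>R (A *v y'))"
    have lm: "\<And>(x::real^'n) (z::real^'m). x \<bullet> (z v* A) = z \<bullet> (A *v x)"
      by (metis dot_lmul_matrix inner_commute)
    show ?thesis
    proof (intro exI ballI)
      fix a assume a: "a \<in> ?D"
      obtain x y z where aa: "a = (x, y, z)" by (cases a) auto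
      have x: "x \<in> Dp" and z: "z \<in> Dd" using a aa by auto
      have "F a - F b - g \<bullet> (a - b) =
             1/\<tau> * bregman_dist phip x x' + 1/\<sigma> * bregman_dist phid z z'
                 + \<tau>/2 * (norm (y - y'))\<^sup>2 - (y - y') \<bullet> (x - x')
                 - (z - z') \<bullet> (A *v (x - x')) + \<tau> * ((z - z') \<bullet> (A *v (y - y')))"
        unfolding aa bb F_def g_def bregman_dist_def gp_def[symmetric] gd_def[symmetric]
        by (simp add: power2_norm_eq_inner inner_diff_left inner_diff_right inner_add_left inner_add_right
              dot_lmul_matrix matrix_vector_mult_diff_distrib matrix_vector_mult_scaleR
              inner_commute algebra_simps lm)
      moreover have "0 \<le> 1/\<tau> * bregman_dist phip x x' + 1/\<sigma> * bregman_dist phid z z'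
                 + \<tau>/2 * (norm (y - y'))\<^sup>2 - (y - y') \<bullet> (x - x')
                 - (z - z') \<bullet> (A *v (x - x')) + \<tau> * ((z - z') \<bullet> (A *v (y - y')))"
        using P2 x z x' z' by blast
      ultimately show "F b + g \<bullet> (a - b) \<le> F a" by linarith
    qed
  qed
  have "convex_on ?D F" by (rule convex_from_support[OF cD iDne cF sup])
  then show ?thesis using P2 unfolding F_def by blast
qed

end
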